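(* For a positive integer $m$, consider the two-stage adjustable problem with $n=m$, $\mathbf c=\mathbf 0$, $\mathbf d=\mathbf e$, $\mathbf A=\mathbf 0$, the matrix $\mathbf B\in\mathbb R_+^{m\times m}$ with $B_{ii}=1$ and $B_{ij}=\frac1{\sqrt m}$ for $i\ne j$, and uncertainty set $$\mathcal U=\operatorname{conv}\left(\mathbf 0,\mathbf e_1,\dots,\mathbf e_m,\boldsymbol\nu_1,\dots,\boldsymbol\nu_m\right),\qquad \boldsymbol\nu_i=\tfrac{1}{\sqrt m}(\mathbf e-\mathbf e_i),\ i\in[m].$$ Then $z_{\sf Aff}(\mathbf B)=\Omega(\sqrt m)\cdot z_{\sf AR}(\mathbf B)$, i.e. there are absolute constants $C>0$ and $m_0$ such that $z_{\sf Aff}(\mathbf B)\ge C\sqrt m\,z_{\sf AR}(\mathbf B)$ for all $m\ge m_0$.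
   Context: For data $\mathbf A,\mathbf B\in\mathbb R_+^{m\times n}$, $\mathbf c,\mathbf d\in\mathbb R_+^n$ and a compact convex set $\mathcal U\subseteq\mathbb R^m_+$, the two-stage adjustable robust problem is $$z_{\sf AR}(\mathbf B)=\min_{\mathbf x\in\mathbb R^n_+}\ \mathbf c^T\mathbf x+\max_{\mathbf h\in\mathcal U}\ \min_{\mathbf y(\mathbf h)\in\mathbb R^n_+:\ \mathbf A\mathbf x+\mathbf B\mathbf y(\mathbf h)\ge \mathbf h}\ \mathbf d^T\mathbf y(\mathbf h).$$ The affine policy problem $z_{\sf Aff}(\mathbf B)$ is the same problem with the second-stage decision restricted to $\mathbf y(\mathbf h)=\mathbf P\mathbf h+\mathbf q$ for some $\mathbf P\in\mathbb R^{n\times m}$, $\mathbf q\in\mathbb R^n$: it is the minimum over $\mathbf x\in\mathbb R^n_+,\mathbf P,\mathbf q$ of $\mathbf c^T\mathbf x+\max_{\mathbf h\in\mathcal U}\mathbf d^T(\mathbf P\mathbf h+\mathbf q)$ subject to $\mathbf A\mathbf x+\mathbf B(\mathbf P\mathbf h+\mathbf q)\ge\mathbf h$ and $\mathbf P\mathbf h+\mathbf q\ge\mathbf 0$ for all $\mathbf h\in\mathcal U$. $\mathbf e$ is the all-ones vector and $\mathbf e_i$ the $i$-th standard basis vector of $\mathbb R^m$. *)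

theory Defs
  imports "HOL-Analysis.Analysis"
begin

text \<open>Vectors in R^k are represented as functions nat => real, only the
coordinates 0..k-1 being relevant; matrices as nat => nat => real
(row index first).  Optimal values are taken in ereal, so that an infeasible
minimisation gives +infinity.\<close>

definition mat_vec :: "nat \<Rightarrow> (nat \<Rightarrow> nat \<Rightarrow> real) \<Rightarrow> (nat \<Rightarrow> real) \<Rightarrow> nat \<Rightarrow> real" where
  "mat_vec n M v = (\<lambda>i. \<Sum>j<n. M i j * v j)"

definition dotp :: "nat \<Rightarrow> (nat \<Rightarrow> real) \<Rightarrow> (nat \<Rightarrow> real) \<Rightarrow> real" where
  "dotp n u v = (\<Sum>j<n. u j * v j)"

definition nonneg_vec :: "nat \<Rightarrow> (nat \<Rightarrow> real) \<Rightarrow> bool" where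
  "nonneg_vec n v \<longleftrightarrow> (\<forall>j<n. 0 \<le> v j)"

definition conv_pts :: "(nat \<Rightarrow> real) set \<Rightarrow> (nat \<Rightarrow> real) set" where
  "conv_pts V = {h. \<exists>w. (\<forall>v\<in>V. 0 \<le> w v) \<and> sum w V = 1 \<and> (\<forall>i. h i = (\<Sum>v\<in>V. w v * v i))}"

definition second_stage :: "nat \<Rightarrow> nat \<Rightarrow> (nat \<Rightarrow> nat \<Rightarrow> real) \<Rightarrow> (nat \<Rightarrow> nat \<Rightarrow> real)
    \<Rightarrow> (nat \<Rightarrow> real) \<Rightarrow> (nat \<Rightarrow> real) \<Rightarrow> (nat \<Rightarrow> real) \<Rightarrow> ereal" where
  "second_stage m n A B d x h =
     (INF y\<in>{y. nonneg_vec n y \<and> (\<forall>i<m. mat_vec n A x i + mat_vec n B y i \<ge> h i)}.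
        ereal (dotp n d y))"

definition z_AR :: "nat \<Rightarrow> nat \<Rightarrow> (nat \<Rightarrow> nat \<Rightarrow> real) \<Rightarrow> (nat \<Rightarrow> nat \<Rightarrow> real)
    \<Rightarrow> (nat \<Rightarrow> real) \<Rightarrow> (nat \<Rightarrow> real) \<Rightarrow> (nat \<Rightarrow> real) set \<Rightarrow> ereal" where
  "z_AR m n A B c d U =
     (INF x\<in>{x. nonneg_vec n x}.
        ereal (dotp n c x) + (SUP h\<in>U. second_stage m n A B d x h))"

definition z_Aff :: "nat \<Rightarrow> nat \<Rightarrow> (nat \<Rightarrow> nat \<Rightarrow> real) \<Rightarrow> (nat \<Rightarrow> nat \<Rightarrow> real)
    \<Rightarrow> (nat \<Rightarrow> real) \<Rightarrow> (nat \<Rightarrow> real) \<Rightarrow> (nat \<Rightarrow> real) set \<Rightarrow> ereal" where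
  "z_Aff m n A B c d U =
     (INF (x, P, q)\<in>{(x, P, q). nonneg_vec n x \<and>
          (\<forall>h\<in>U. (\<forall>i<m. mat_vec n A x i + mat_vec n B (\<lambda>j. mat_vec m P h j + q j) i \<ge> h i)
                 \<and> nonneg_vec n (\<lambda>j. mat_vec m P h j + q j))}.
        ereal (dotp n c x) + (SUP h\<in>U. ereal (dotp n d (\<lambda>j. mat_vec m P h j + q j))))"

definition unit_vec :: "nat \<Rightarrow> nat \<Rightarrow> real" where
  "unit_vec i = (\<lambda>j. if j = i then 1 else 0)"

definition nu_vec :: "nat \<Rightarrow> nat \<Rightarrow> nat \<Rightarrow> real" where
  "nu_vec m i = (\<lambda>j. if j < m \<and> j \<noteq> i then 1 / sqrt (real m) else 0)"

definition U_inst :: "nat \<Rightarrow> (nat \<Rightarrow> real) set" where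
  "U_inst m = conv_pts ({\<lambda>_. 0} \<union> unit_vec ` {..<m} \<union> nu_vec m ` {..<m})"

definition B_inst :: "nat \<Rightarrow> nat \<Rightarrow> nat \<Rightarrow> real" where
  "B_inst m = (\<lambda>i j. if i = j then 1 else 1 / sqrt (real m))"

end

theory Submission
  imports Defs
begin
lemma mat_vec_unit: "k < n \<Longrightarrow> mat_vec n M (unit_vec k) i = M i k"
  by (simp add: mat_vec_def unit_vec_def if_distrib cong: if_cong)
lemma conv_mem: "finite V \<Longrightarrow> p \<in> V \<Longrightarrow> p \<in> conv_pts V"
  unfolding conv_pts_def
  apply (rule CollectI)
  apply (rule exI[of _ "\<lambda>v. if v = p then 1 else 0"])
  apply (auto)
  apply (subst sum.cong[OF refl, of _ _ "\<lambda>v. if v = p then p i else 0" for i])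
   apply auto
  done
lemma mat_vec_nu: "i < m \<Longrightarrow> mat_vec m P (nu_vec m i) j = ((\<Sum>l<m. P j l) - P j i) / sqrt (real m)"
proof -
  assume i: "i < m"
  have "mat_vec m P (nu_vec m i) j = (\<Sum>l<m. P j l / sqrt m - (if l = i then P j l / sqrt m else 0))"
    unfolding mat_vec_def nu_vec_def by (rule sum.cong) auto
  also have "\<dots> = (\<Sum>l<m. P j l) / sqrt m - P j i / sqrt m"
    using i by (simp add: sum_subtractf sum_divide_distrib)
  finally show ?thesis by (simp add: diff_divide_distrib)
qed
lemma mat_vec_B: "j < m \<Longrightarrow> mat_vec m (B_inst m) v j = v j + ((\<Sum>k<m. v k) - v j) / sqrt (real m)"
proof -
  assume j: "j < m"
  have "mat_vec m (B_inst m) v j = (\<Sum>k<m. v k / sqrt m + (if k = j then v k - v k / sqrt m else 0))"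
    unfolding mat_vec_def B_inst_def by (rule sum.cong) auto
  also have "\<dots> = (\<Sum>k<m. v k) / sqrt m + (v j - v j / sqrt m)"
    using j by (simp add: sum.distrib sum_divide_distrib)
  finally show ?thesis by (simp add: diff_divide_distrib)
qed
lemma arith:
  fixes r m s T Tot :: real
  assumes r: "r > 0" "r * r = m" "m \<ge> 1" and s: "s \<ge> 0"
    and a: "(Tot - T) / r + s \<ge> 0"
    and b: "T + s + (Tot + m * s - T - s) / r \<ge> m"
  shows "(m - 1) * Tot / r + 2 * m * s \<ge> (m - 1) * r"
proof -
  have r1: "r \<ge> 1"
  proof (rule ccontr)
    assume "\<not> r \<ge> 1" then have "r * r < 1 * 1" using r(1) by (intro mult_strict_mono) auto
    then show False using r by simp
  qed
  have a': "T \<le> Tot + r * s" using a r by (simp add: field_simps)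
  have b': "r * T + r * s + (Tot + m * s - T - s) \<ge> m * r" using b r by (simp add: field_simps)
  have h1: "(r - 1) * T \<le> (r - 1) * (Tot + r * s)" using a' r1 by (simp add: mult_left_mono)
  have h2': "r * Tot \<ge> m * r - 2 * (m * s) + s"
  proof -
    have "r * (r * s) = m * s" using r(2) by (simp add: mult.assoc[symmetric])
    moreover have "r * T - T \<le> r * Tot + r * (r * s) - Tot - r * s" using h1 by (simp add: algebra_simps)
    ultimately show ?thesis using b' by linarith
  qed
  have h2: "r * Tot \<ge> m * r - (2 * m - 1) * s" using h2' by (simp add: algebra_simps)
  have h3: "(m - 1) * (r * Tot) \<ge> (m - 1) * (m * r - (2 * m - 1) * s)"
    using h2 r(3) by (simp add: mult_left_mono)
  have h4: "2 * m * s * m \<ge> (m - 1) * (2 * m - 1) * s"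
  proof -
    have "s * 1 \<le> s * m" using s r(3) by (intro mult_left_mono)
    then show ?thesis using s by (simp add: algebra_simps)
  qed
  have h5: "(m - 1) * r * Tot + 2 * m * s * m \<ge> (m - 1) * r * m"
    using h3 h4 by (simp add: algebra_simps)
  have mr: "m / r = r" using r by (simp add: field_simps)
  have "m * ((m - 1) * Tot / r + 2 * m * s) = (m - 1) * Tot * (m / r) + 2 * m * s * m"
    by (simp add: algebra_simps add_divide_distrib[symmetric])
  also have "\<dots> = (m - 1) * r * Tot + 2 * m * s * m" using mr by simp
  finally have "m * ((m - 1) * Tot / r + 2 * m * s) \<ge> m * ((m - 1) * r)"
    using h5 by (simp add: algebra_simps)
  then show ?thesis using r by (simp add: mult_le_cancel_left_pos)
qed
lemma mat_vec_zero: "mat_vec n (\<lambda>_ _. 0) x i = 0" by (simp add: mat_vec_def)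
lemma finV: "finite ({\<lambda>_. 0} \<union> unit_vec ` {..<m} \<union> nu_vec m ` {..<m})" by simp
lemma U0: "(\<lambda>_. 0) \<in> U_inst m" unfolding U_inst_def by (rule conv_mem[OF finV]) simp
lemma Ue: "k < m \<Longrightarrow> unit_vec k \<in> U_inst m" unfolding U_inst_def by (rule conv_mem[OF finV]) simp
lemma Unu: "k < m \<Longrightarrow> nu_vec m k \<in> U_inst m" unfolding U_inst_def by (rule conv_mem[OF finV]) simp

lemma aff_bound:
  assumes m2: "m \<ge> 2"
  shows "ereal (sqrt (real m) / 4) \<le> z_Aff m m (\<lambda>_ _. 0) (B_inst m) (\<lambda>_. 0) (\<lambda>_. 1) (U_inst m)"
  unfolding z_Aff_def
proof (rule INF_greatest, clarify)
  fix x P q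
  assume xnn: "nonneg_vec m x" and feas: "\<forall>h\<in>U_inst m. (\<forall>i<m. h i \<le> mat_vec m (\<lambda>_ _. 0) x i + mat_vec m (B_inst m) (\<lambda>j. mat_vec m P h j + q j) i) \<and> nonneg_vec m (\<lambda>j. mat_vec m P h j + q j)"
  show "ereal (sqrt (real m) / 4) \<le> ereal (dotp m (\<lambda>_. 0) x) + (SUP h\<in>U_inst m. ereal (dotp m (\<lambda>_. 1) (\<lambda>j. mat_vec m P h j + q j)))"
  proof -
  define r where "r = sqrt (real m)"
  have r0: "r > 0" using m2 by (simp add: r_def)
  have rr: "r * r = real m" by (simp add: r_def)
  have m1: "real m \<ge> 1" using m2 by simp
  define y where "y h = (\<lambda>j. mat_vec m P h j + q j)" for h
  have F: "\<forall>h\<in>U_inst m. (\<forall>i<m. mat_vec m (B_inst m) (y h) i \<ge> h i) \<and> (\<forall>j<m. y h j \<ge> 0)"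
    using feas by (simp add: y_def nonneg_vec_def mat_vec_zero)
  define f where "f h = (\<Sum>j<m. y h j)" for h
  have dot: "dotp m (\<lambda>_. 1) (y h) = f h" for h by (simp add: dotp_def f_def)
  have y0: "y (\<lambda>_. 0) j = q j" for j by (simp add: y_def mat_vec_def)
  have ye: "k < m \<Longrightarrow> y (unit_vec k) j = P j k + q j" for k j by (simp add: y_def mat_vec_unit)
  have ynu: "i < m \<Longrightarrow> y (nu_vec m i) j = ((\<Sum>l<m. P j l) - P j i) / r + q j" for i j
    by (simp add: y_def mat_vec_nu r_def)
  define s where "s = (\<Sum>j<m. q j)"
  define T where "T = (\<Sum>i<m. P i i)"
  define Tot where "Tot = (\<Sum>i<m. \<Sum>l<m. P i l)"
  have qnn: "j < m \<Longrightarrow> q j \<ge> 0" for j using F U0[of m] y0 by metis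
  have s0: "s \<ge> 0" unfolding s_def using qnn by (intro sum_nonneg) simp
  have a1: "0 \<le> ((\<Sum>l<m. P i l) - P i i) / r + q i" if "i < m" for i
    using F Unu[OF that] ynu[OF that, of i] that by metis
  have a: "(Tot - T) / r + s \<ge> 0"
  proof -
    have "0 \<le> (\<Sum>i<m. ((\<Sum>l<m. P i l) - P i i) / r + q i)" using a1 by (intro sum_nonneg) simp
    also have "\<dots> = (Tot - T) / r + s"
      by (simp add: Tot_def T_def s_def sum.distrib sum_subtractf sum_divide_distrib[symmetric])
    finally show ?thesis .
  qed
  have b1: "1 \<le> (P j j + q j) + ((\<Sum>k<m. P k j + q k) - (P j j + q j)) / r" if "j < m" for j
  proof -
    have "unit_vec j j \<le> mat_vec m (B_inst m) (y (unit_vec j)) j" using F Ue[OF that] that by blast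
    also have "\<dots> = (P j j + q j) + ((\<Sum>k<m. P k j + q k) - (P j j + q j)) / r"
      using that by (simp add: mat_vec_B ye r_def)
    finally show ?thesis by (simp add: unit_vec_def)
  qed
  have b: "T + s + (Tot + real m * s - T - s) / r \<ge> real m"
  proof -
    have "(\<Sum>j<m. (1::real)) \<le> (\<Sum>j<m. (P j j + q j) + ((\<Sum>k<m. P k j + q k) - (P j j + q j)) / r)"
      using b1 by (intro sum_mono) simp
    also have "\<dots> = T + s + (Tot + real m * s - T - s) / r"
      by (simp add: Tot_def T_def s_def sum.distrib sum_subtractf sum_divide_distrib[symmetric] sum.swap[of "\<lambda>k j. P k j"])
    finally show ?thesis by simp
  qed
  have Fnu: "(\<Sum>i<m. f (nu_vec m i)) = (real m - 1) * Tot / r + real m * s"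
  proof -
    have "(\<Sum>i<m. f (nu_vec m i)) = (\<Sum>i<m. \<Sum>j<m. ((\<Sum>l<m. P j l) - P j i) / r + q j)"
      by (simp add: f_def ynu)
    also have "\<dots> = (real m - 1) * Tot / r + real m * s"
      by (simp add: Tot_def s_def sum.distrib sum_subtractf sum_divide_distrib[symmetric] sum.swap[of "\<lambda>i j. P j i"] algebra_simps)
    finally show ?thesis .
  qed
  have key: "(real m - 1) * Tot / r + 2 * real m * s \<ge> (real m - 1) * r"
    using arith[OF r0 rr m1 s0 a b] .
  define M where "M = (real m - 1) * r / (2 * real m)"
  have ex: "\<exists>h\<in>U_inst m. f h \<ge> M"
  proof (rule ccontr)
    assume "\<not> ?thesis"
    then have lt: "\<forall>h\<in>U_inst m. f h < M" by auto
    have "f (\<lambda>_. 0) = s" by (simp add: f_def y0 s_def)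
    then have sM: "s < M" using lt U0[of m] by metis
    have "(\<Sum>i<m. f (nu_vec m i)) < (\<Sum>i<m. M)"
      using m2 lt Unu by (intro sum_strict_mono) (auto simp: lessThan_empty_iff)
    then have "(real m - 1) * Tot / r + real m * s < real m * M" using Fnu by simp
    moreover have "real m * s < real m * M" using sM m2 by simp
    ultimately have "(real m - 1) * Tot / r + 2 * real m * s < 2 * real m * M" by simp
    also have "2 * real m * M = (real m - 1) * r" using m2 by (simp add: M_def)
    finally show False using key by simp
  qed
  then obtain h where hU: "h \<in> U_inst m" and hM: "f h \<ge> M" by blast
  have "r / 4 \<le> M"
  proof -
    have "r * (2 * real m) \<le> 4 * ((real m - 1) * r)" using m2 r0 by (simp add: algebra_simps)
    then show ?thesis using m2 r0 by (simp add: M_def field_simps)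
  qed
  then have "ereal (r / 4) \<le> ereal (dotp m (\<lambda>_. 1) (y h))" using hM dot by simp
  also have "\<dots> \<le> (SUP h\<in>U_inst m. ereal (dotp m (\<lambda>_. 1) (y h)))" using hU by (rule SUP_upper)
  finally show ?thesis by (simp add: r_def y_def dotp_def)
  qed
qed

lemma unit_vec_apply: "unit_vec k j = (if j = k then 1 else 0)" by (simp add: unit_vec_def)
lemma vert_sol:
  assumes "v \<in> {\<lambda>_. 0} \<union> unit_vec ` {..<m} \<union> nu_vec m ` {..<m}"
  shows "\<exists>y. nonneg_vec m y \<and> (\<Sum>k<m. y k) \<le> 1 \<and> (\<forall>i<m. mat_vec m (B_inst m) y i \<ge> v i)"
  using assms
proof (elim UnE)
  assume "v \<in> {\<lambda>_. 0}"
  then show ?thesis by (intro exI[of _ "\<lambda>_. 0"]) (auto simp: nonneg_vec_def mat_vec_def)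
next
  assume "v \<in> unit_vec ` {..<m}"
  then obtain k where k: "k < m" and v: "v = unit_vec k" by auto
  show ?thesis
    by (intro exI[of _ "unit_vec k"]) (auto simp: k v nonneg_vec_def mat_vec_unit unit_vec_apply B_inst_def)
next
  assume "v \<in> nu_vec m ` {..<m}"
  then obtain k where k: "k < m" and v: "v = nu_vec m k" by auto
  show ?thesis
    by (intro exI[of _ "unit_vec k"]) (auto simp: k v nonneg_vec_def mat_vec_unit unit_vec_apply B_inst_def nu_vec_def)
qed

lemma ar_bound:
  shows "z_AR m m (\<lambda>_ _. 0) (B_inst m) (\<lambda>_. 0) (\<lambda>_. 1) (U_inst m) \<le> 1"
  unfolding z_AR_def
proof (rule INF_lower2[of "\<lambda>_. 0"])
  show "(\<lambda>_. 0) \<in> {x. nonneg_vec m x}" by (simp add: nonneg_vec_def)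
  define V where "V = {\<lambda>_. 0} \<union> unit_vec ` {..<m} \<union> nu_vec m ` {..<m}"
  have finV': "finite V" unfolding V_def by simp
  define g where "g v = (SOME y. nonneg_vec m y \<and> (\<Sum>k<m. y k) \<le> 1 \<and> (\<forall>i<m. mat_vec m (B_inst m) y i \<ge> v i))" for v
  have g: "nonneg_vec m (g v) \<and> (\<Sum>k<m. g v k) \<le> 1 \<and> (\<forall>i<m. mat_vec m (B_inst m) (g v) i \<ge> v i)" if "v \<in> V" for v
  proof -
    have e: "\<exists>y. nonneg_vec m y \<and> (\<Sum>k<m. y k) \<le> 1 \<and> (\<forall>i<m. mat_vec m (B_inst m) y i \<ge> v i)"
      by (rule vert_sol) (use that V_def in simp)
    show ?thesis unfolding g_def by (rule someI_ex[OF e])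
  qed
  have "(SUP h\<in>U_inst m. second_stage m m (\<lambda>_ _. 0) (B_inst m) (\<lambda>_. 1) (\<lambda>_. 0) h) \<le> 1"
  proof (rule SUP_least)
    fix h assume "h \<in> U_inst m"
    then obtain w where w0: "\<forall>v\<in>V. 0 \<le> w v" and w1: "sum w V = 1" and hw: "\<forall>i. h i = (\<Sum>v\<in>V. w v * v i)"
      unfolding U_inst_def conv_pts_def V_def by blast
    define Y where "Y k = (\<Sum>v\<in>V. w v * g v k)" for k
    have Ynn: "nonneg_vec m Y" unfolding nonneg_vec_def Y_def
      using g w0 by (auto simp: nonneg_vec_def intro!: sum_nonneg)
    have "(\<Sum>k<m. Y k) = (\<Sum>v\<in>V. w v * (\<Sum>k<m. g v k))"
      unfolding Y_def by (simp add: sum_distrib_left sum.swap[of _ V])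
    also have "\<dots> \<le> (\<Sum>v\<in>V. w v * 1)"
      using g w0 by (intro sum_mono mult_left_mono) auto
    finally have Ycost: "(\<Sum>k<m. Y k) \<le> 1" using w1 by simp
    have Ycons: "h i \<le> mat_vec m (B_inst m) Y i" if "i < m" for i
    proof -
      have "h i = (\<Sum>v\<in>V. w v * v i)" using hw by simp
      also have "\<dots> \<le> (\<Sum>v\<in>V. w v * mat_vec m (B_inst m) (g v) i)"
        using g w0 that by (intro sum_mono mult_left_mono) auto
      also have "\<dots> = mat_vec m (B_inst m) Y i"
        unfolding mat_vec_def Y_def
        by (simp add: sum_distrib_left sum.swap[of _ V] algebra_simps)
      finally show ?thesis .
    qed
    have "second_stage m m (\<lambda>_ _. 0) (B_inst m) (\<lambda>_. 1) (\<lambda>_. 0) h \<le> ereal (dotp m (\<lambda>_. 1) Y)"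
      unfolding second_stage_def
      by (rule INF_lower) (use Ynn Ycons in \<open>simp add: mat_vec_zero\<close>)
    also have "\<dots> \<le> 1" using Ycost by (simp add: dotp_def)
    finally show "second_stage m m (\<lambda>_ _. 0) (B_inst m) (\<lambda>_. 1) (\<lambda>_. 0) h \<le> 1" .
  qed
  then show "ereal (dotp m (\<lambda>_. 0) (\<lambda>_. 0)) + (SUP h\<in>U_inst m. second_stage m m (\<lambda>_ _. 0) (B_inst m) (\<lambda>_. 1) (\<lambda>_. 0) h) \<le> 1"
    by (simp add: dotp_def)
qed

theorem lemma5:
  shows "\<exists>C > 0. \<exists>m0::nat. \<forall>m::nat. m \<ge> m0 \<and> m > 0 \<longrightarrow>
    z_Aff m m (\<lambda>_ _. 0) (B_inst m) (\<lambda>_. 0) (\<lambda>_. 1) (U_inst m)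
      \<ge> ereal (C * sqrt (real m)) * z_AR m m (\<lambda>_ _. 0) (B_inst m) (\<lambda>_. 0) (\<lambda>_. 1) (U_inst m)"
proof (intro exI[of _ "1/4"] conjI exI[of _ 2] allI impI)
  fix m :: nat assume "2 \<le> m \<and> 0 < m"
  then have m2: "m \<ge> 2" by simp
  have "ereal (1/4 * sqrt (real m)) * z_AR m m (\<lambda>_ _. 0) (B_inst m) (\<lambda>_. 0) (\<lambda>_. 1) (U_inst m)
      \<le> ereal (1/4 * sqrt (real m)) * 1"
    by (rule ereal_mult_left_mono[OF ar_bound]) simp
  also have "\<dots> = ereal (sqrt (real m) / 4)" by simp
  also have "\<dots> \<le> z_Aff m m (\<lambda>_ _. 0) (B_inst m) (\<lambda>_. 0) (\<lambda>_. 1) (U_inst m)"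
    by (rule aff_bound[OF m2])
  finally show "ereal (1/4 * sqrt (real m)) * z_AR m m (\<lambda>_ _. 0) (B_inst m) (\<lambda>_. 0) (\<lambda>_. 1) (U_inst m)
      \<le> z_Aff m m (\<lambda>_ _. 0) (B_inst m) (\<lambda>_. 0) (\<lambda>_. 1) (U_inst m)" .
qed (simp)
end
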